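(* Let $D$ be a finite directed graph that is essentially a tree, with at least two vertices, and let $v$ be a leaf of $D$, i.e. there is a unique vertex $x$ such that every edge of $D$ incident to $v$ is $\overrightarrow{vx}$ or $\overrightarrow{xv}$ (at least one of these is in $E(D)$). Let $D'=D\setminus\{v\}$ (delete $v$ and its incident edges), let $y_1,\ldots,y_k$ be the vertices $y$ of $D'$ with $\overrightarrow{yx}\in E(D')$, indexed so that $\overrightarrow{xy_i}\in E(D)$ exactly for $i=1,\ldots,s$ ($0\le s\le k$). Let $D_0=D'\setminus\{\overrightarrow{y_1x},\ldots,\overrightarrow{y_kx}\}$ and, for $p=1,\ldots,k$, let $D_p=D_0\setminus\{\overrightarrow{xy_p}\}$ (so $D_p=D_0$ for $p>s$). Let $F_1,\ldots,F_t$ be a shelling order of $\Delta(D')$, $H_1,\ldots,H_q$ a shelling order of $\Delta(D_0)$, and for each $p$ let $G^p_1,\ldots,G^p_{t_p}$ be a shelling order of $\Delta(D_p)$. Then: (a) If $\overrightarrow{xv}\in E(D)$ and $\overrightarrow{vx}\notin E(D)$, then $F_1\cup\{\overrightarrow{xv}\},\ldots,F_t\cup\{\overrightarrow{xv}\}$ is a shelling order of $\Delta(D)$, and $h_{i,j}(\Delta(D))=h_{i-1,j}(\Delta(D'))$ for all $i,j$. (b) If $\overrightarrow{xv}\notin E(D)$ and $\overrightarrow{vx}\in E(D)$, then $$H_1\cup\{\overrightarrow{vx}\},\ldots,H_q\cup\{\overrightarrow{vx}\},G^1_1\cup\{\overrightarrow{y_1x}\},\ldots,G^1_{t_1}\cup\{\overrightarrow{y_1x}\},\ldots,G^k_1\cup\{\overrightarrow{y_kx}\},\ldots,G^k_{t_k}\cup\{\overrightarrow{y_kx}\}$$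 is a shelling order of $\Delta(D)$, and $h_{i,j}(\Delta(D))=h_{i-1,j}(\Delta(D_0))+\sum_{p=1}^k h_{i-1,j-1}(\Delta(D_p))$. (c) If $\overrightarrow{xv},\overrightarrow{vx}\in E(D)$, then $$F_1\cup\{\overrightarrow{xv}\},\ldots,F_t\cup\{\overrightarrow{xv}\},H_1\cup\{\overrightarrow{vx}\},\ldots,H_q\cup\{\overrightarrow{vx}\}$$ is a shelling order of $\Delta(D)$, and $h_{i,j}(\Delta(D))=h_{i-1,j}(\Delta(D'))+h_{i-1,j-1}(\Delta(D_0))$.
   Context: For a finite directed graph $D$ (no loops, no multiple edges), $\Delta(D)$ has the directed edges of $D$ as vertices and the edge sets of directed forests in $D$ (vertex-disjoint unions of rooted directed trees; equivalently, edge sets in which every vertex has in-degree at most $1$ and there is no directed cycle) as faces. $D$ is essentially a tree if replacing every directed edge, or pair of opposite directed edges, by one undirected edge yields a tree. A (possibly nonpure) complex is shellable with shelling order $F_1,\ldots,F_k$ of its facets if for all $i<j$ there exist $l<j$ and $v\in F_j$ with $F_i\cap F_j\subseteq F_l\cap F_j=F_j\setminus\{v\}$. For a complex $\Delta$, $f_{i,j}(\Delta)$ is the number of faces $A$ with $|A|=j$ such that the largest face containing $A$ has $i$ vertices, and the $h$-triangle is $h_{i,j}(\Delta)=\sum_{k=0}^{j}(-1)^{j-k}{i-k\choose j-k}f_{i,k}(\Delta)$. *)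

theory Defs
  imports Main
begin

definition digraph :: "'a set \<Rightarrow> ('a \<times> 'a) set \<Rightarrow> bool" where
  "digraph V E \<longleftrightarrow> finite V \<and> E \<subseteq> V \<times> V \<and> (\<forall>u. (u, u) \<notin> E)"

definition uadj :: "('a \<times> 'a) set \<Rightarrow> 'a \<Rightarrow> 'a \<Rightarrow> bool" where
  "uadj E u w \<longleftrightarrow> (u, w) \<in> E \<or> (w, u) \<in> E"

definition uconnected :: "'a set \<Rightarrow> ('a \<times> 'a) set \<Rightarrow> bool" where
  "uconnected V E \<longleftrightarrow> (\<forall>u\<in>V. \<forall>w\<in>V. (u, w) \<in> {(a, b). uadj E a b}\<^sup>*)"

definition has_ucycle :: "('a \<times> 'a) set \<Rightarrow> bool" where
  "has_ucycle E \<longleftrightarrow> (\<exists>cs. length cs \<ge> 3 \<and> distinct cs \<and>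
     (\<forall>i < length cs. uadj E (cs ! i) (cs ! (Suc i mod length cs))))"

definition essentially_tree :: "'a set \<Rightarrow> ('a \<times> 'a) set \<Rightarrow> bool" where
  "essentially_tree V E \<longleftrightarrow> V \<noteq> {} \<and> uconnected V E \<and> \<not> has_ucycle E"

definition directed_forest :: "('a \<times> 'a) set \<Rightarrow> ('a \<times> 'a) set \<Rightarrow> bool" where
  "directed_forest E A \<longleftrightarrow> A \<subseteq> E \<and> (\<forall>u u' w. (u, w) \<in> A \<and> (u', w) \<in> A \<longrightarrow> u = u')
     \<and> acyclic A"

text \<open>The complex \<Delta>(D), given as its set of faces (vertices = edges of D).\<close>
definition Delta :: "('a \<times> 'a) set \<Rightarrow> ('a \<times> 'a) set set" where
  "Delta E = {A. directed_forest E A}"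

definition facets :: "'v set set \<Rightarrow> 'v set set" where
  "facets \<Delta> = {F \<in> \<Delta>. \<forall>G \<in> \<Delta>. F \<subseteq> G \<longrightarrow> G = F}"

definition shelling_order :: "'v set set \<Rightarrow> 'v set list \<Rightarrow> bool" where
  "shelling_order \<Delta> Fs \<longleftrightarrow> distinct Fs \<and> set Fs = facets \<Delta> \<and>
     (\<forall>j < length Fs. \<forall>i < j. \<exists>l < j. \<exists>v \<in> Fs ! j.
        Fs ! i \<inter> Fs ! j \<subseteq> Fs ! l \<inter> Fs ! j \<and> Fs ! l \<inter> Fs ! j = Fs ! j - {v})"

definition maxface_size :: "'v set set \<Rightarrow> 'v set \<Rightarrow> nat" where
  "maxface_size \<Delta> A = Max (card ` {B \<in> \<Delta>. A \<subseteq> B})"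

text \<open>f_{i,j}, with integer indices (zero for negative indices).\<close>
definition ftri :: "'v set set \<Rightarrow> int \<Rightarrow> int \<Rightarrow> nat" where
  "ftri \<Delta> i j = card {A \<in> \<Delta>. int (card A) = j \<and> int (maxface_size \<Delta> A) = i}"

text \<open>h_{i,j} = sum_{k=0}^{j} (-1)^{j-k} binom(i-k, j-k) f_{i,k}; integer indices,
  so that h_{i-1,j} and h_{i-1,j-1} make sense for all i, j (empty sum if j < 0).
  When k > i the term vanishes since f_{i,k} = 0.\<close>
definition htri :: "'v set set \<Rightarrow> int \<Rightarrow> int \<Rightarrow> int" where
  "htri \<Delta> i j = (\<Sum>k\<in>{0..j}. (-1) ^ nat (j - k) * int (nat (i - k) choose nat (j - k))
                      * int (ftri \<Delta> i k))"

definition del_vertex_edges :: "('a \<times> 'a) set \<Rightarrow> 'a \<Rightarrow> ('a \<times> 'a) set" where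
  "del_vertex_edges E v = {e \<in> E. fst e \<noteq> v \<and> snd e \<noteq> v}"

end

theory Submission
  imports Defs "HOL-Library.Transitive_Closure_Table"
begin

definition RR :: "'v set set \<Rightarrow> 'v set \<Rightarrow> 'v set \<Rightarrow> bool" where
  "RR P X c \<longleftrightarrow> (\<exists>Y\<in>P. \<exists>w\<in>c. X \<inter> c \<subseteq> Y \<inter> c \<and> Y \<inter> c = c - {w})"

fun sh :: "'v set set \<Rightarrow> 'v set list \<Rightarrow> bool" where
  "sh P [] = True"
| "sh P (c # cs) = ((\<forall>X\<in>P. RR P X c) \<and> sh (insert c P) cs)"

lemma RR_mono: "RR P X c \<Longrightarrow> P \<subseteq> Q \<Longrightarrow> RR Q X c"
  unfolding RR_def by blast

lemma take_Suc_set: "j < length L \<Longrightarrow> set (take (Suc j) L) = insert (L ! j) (set (take j L))"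
  by (simp add: take_Suc_conv_app_nth)

lemma sh_iff: "sh P L \<longleftrightarrow> (\<forall>j<length L. \<forall>X \<in> P \<union> set (take j L). RR (P \<union> set (take j L)) X (L!j))"
proof (induction L arbitrary: P)
  case Nil
  then show ?case by simp
next
  case (Cons c cs)
  have "sh P (c # cs) \<longleftrightarrow> (\<forall>X\<in>P. RR P X c) \<and> (\<forall>j<length cs. \<forall>X \<in> insert c P \<union> set (take j cs). RR (insert c P \<union> set (take j cs)) X (cs!j))"
    using Cons by simp
  also have "\<dots> \<longleftrightarrow> (\<forall>j<length (c#cs). \<forall>X \<in> P \<union> set (take j (c#cs)). RR (P \<union> set (take j (c#cs))) X ((c#cs)!j))"
  proof -
    have eq: "insert c P \<union> set (take j cs) = P \<union> set (take (Suc j) (c#cs))" for j by auto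
    show ?thesis
      apply (rule iffI)
      subgoal apply clarify
        subgoal for j X by (cases j) (auto simp: eq)
        done
      subgoal apply (intro conjI)
        subgoal apply (erule allE[of _ 0]) by simp
        apply clarify
        subgoal for j X using eq[of j] by (metis Suc_less_eq length_Cons nth_Cons_Suc)
        done
      done
  qed
  finally show ?case .
qed

lemma set_take_conv: "X \<in> set (take j L) \<longleftrightarrow> (\<exists>i<j. i < length L \<and> L ! i = X)"
  by (auto simp: in_set_conv_nth)

lemma shelling_iff: "shelling_order \<Delta> Fs \<longleftrightarrow> distinct Fs \<and> set Fs = facets \<Delta> \<and> sh {} Fs"
proof -
  have "(\<forall>i < j. \<exists>l < j. \<exists>v \<in> Fs ! j. Fs ! i \<inter> Fs ! j \<subseteq> Fs ! l \<inter> Fs ! j \<and> Fs ! l \<inter> Fs ! j = Fs ! j - {v})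
     \<longleftrightarrow> (\<forall>X \<in> set (take j Fs). RR (set (take j Fs)) X (Fs!j))" if jl: "j < length Fs" for j
  proof
    assume H: "\<forall>i < j. \<exists>l < j. \<exists>v \<in> Fs ! j. Fs ! i \<inter> Fs ! j \<subseteq> Fs ! l \<inter> Fs ! j \<and> Fs ! l \<inter> Fs ! j = Fs ! j - {v}"
    show "\<forall>X \<in> set (take j Fs). RR (set (take j Fs)) X (Fs!j)"
    proof
      fix X assume "X \<in> set (take j Fs)"
      then obtain i where i: "i < j" "Fs ! i = X" unfolding set_take_conv by blast
      then obtain l v where lv: "l < j" "v \<in> Fs ! j" "Fs ! i \<inter> Fs ! j \<subseteq> Fs ! l \<inter> Fs ! j" "Fs ! l \<inter> Fs ! j = Fs ! j - {v}"
        using H by blast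
      have "Fs ! l \<in> set (take j Fs)" unfolding set_take_conv using lv jl by auto
      then show "RR (set (take j Fs)) X (Fs!j)" unfolding RR_def using lv i by blast
    qed
  next
    assume H: "\<forall>X \<in> set (take j Fs). RR (set (take j Fs)) X (Fs!j)"
    show "\<forall>i < j. \<exists>l < j. \<exists>v \<in> Fs ! j. Fs ! i \<inter> Fs ! j \<subseteq> Fs ! l \<inter> Fs ! j \<and> Fs ! l \<inter> Fs ! j = Fs ! j - {v}"
    proof (intro allI impI)
      fix i assume i: "i < j"
      have "Fs ! i \<in> set (take j Fs)" unfolding set_take_conv using i jl by auto
      then have "RR (set (take j Fs)) (Fs ! i) (Fs!j)" using H by blast
      then obtain Y v where Y: "Y \<in> set (take j Fs)" "v \<in> Fs ! j" "Fs ! i \<inter> Fs ! j \<subseteq> Y \<inter> Fs ! j" "Y \<inter> Fs ! j = Fs ! j - {v}"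
        unfolding RR_def by blast
      then obtain l where "l < j" "Fs ! l = Y" unfolding set_take_conv by blast
      then show "\<exists>l < j. \<exists>v \<in> Fs ! j. Fs ! i \<inter> Fs ! j \<subseteq> Fs ! l \<inter> Fs ! j \<and> Fs ! l \<inter> Fs ! j = Fs ! j - {v}"
        using Y by blast
    qed
  qed
  then show ?thesis unfolding shelling_order_def sh_iff by auto
qed

lemma sh_append: "sh P (L1 @ L2) \<longleftrightarrow> sh P L1 \<and> sh (P \<union> set L1) L2"
  by (induction L1 arbitrary: P) auto

lemma blk1:
  assumes "sh P (c#cs)" "e \<notin> c" "insert e ` P \<subseteq> S" "X \<in> insert e ` P"
  shows "RR S X (insert e c)"
proof -
  obtain X0 where X0: "X0 \<in> P" "X = insert e X0" using assms(4) by blast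
  have "RR P X0 c" using assms(1) X0(1) by simp
  then obtain Y w where Y: "Y \<in> P" "w \<in> c" "X0 \<inter> c \<subseteq> Y \<inter> c" "Y \<inter> c = c - {w}"
    unfolding RR_def by blast
  have wn: "w \<noteq> e" using Y(2) assms(2) by blast
  have i1: "X \<inter> insert e c = insert e (X0 \<inter> c)" using X0(2) by blast
  have i2: "insert e Y \<inter> insert e c = insert e (Y \<inter> c)" by blast
  have i3: "insert e c - {w} = insert e (c - {w})" using wn by blast
  have "X \<inter> insert e c \<subseteq> insert e Y \<inter> insert e c \<and> insert e Y \<inter> insert e c = insert e c - {w}"
    unfolding i1 i2 i3 using Y(3,4) by blast
  moreover have "insert e Y \<in> S" using Y(1) assms(3) by blast
  moreover have "w \<in> insert e c" using Y(2) by blast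
  ultimately show ?thesis unfolding RR_def by blast
qed

lemma sh_block:
  assumes "sh P L" "\<forall>c\<in>set L. e \<notin> c" "insert e ` P \<subseteq> S"
    "\<forall>c \<in> set L. \<forall>X \<in> S. X \<notin> insert e ` P \<longrightarrow> RR S X (insert e c)"
  shows "sh S (map (insert e) L)"
  using assms
proof (induction L arbitrary: P S)
  case Nil
  then show ?case by simp
next
  case (Cons c cs)
  have ec: "e \<notin> c" using Cons.prems(2) by simp
  have 1: "\<forall>X\<in>S. RR S X (insert e c)"
  proof
    fix X assume X: "X \<in> S"
    show "RR S X (insert e c)"
    proof (cases "X \<in> insert e ` P")
      case True
      then show ?thesis using blk1[OF Cons.prems(1) ec Cons.prems(3)] by blast
    next
      case False
      have "\<forall>X \<in> S. X \<notin> insert e ` P \<longrightarrow> RR S X (insert e c)"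
        using Cons.prems(4) by (rule bspec) simp
      then show ?thesis using False X by blast
    qed
  qed
  have 2: "sh (insert (insert e c) S) (map (insert e) cs)"
  proof (rule Cons.IH[of "insert c P"])
    show "sh (insert c P) cs" using Cons.prems(1) by simp
    show "\<forall>c\<in>set cs. e \<notin> c" using Cons.prems(2) by simp
    show "insert e ` insert c P \<subseteq> insert (insert e c) S" using Cons.prems(3) by blast
    show "\<forall>c'\<in>set cs. \<forall>X\<in>insert (insert e c) S. X \<notin> insert e ` insert c P \<longrightarrow> RR (insert (insert e c) S) X (insert e c')"
    proof (intro ballI impI)
      fix c' X assume a: "c' \<in> set cs" "X \<in> insert (insert e c) S" "X \<notin> insert e ` insert c P"
      then have "X \<in> S" "X \<notin> insert e ` P" by auto
      moreover have "\<forall>X \<in> S. X \<notin> insert e ` P \<longrightarrow> RR S X (insert e c')"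
        using Cons.prems(4) by (rule bspec) (simp add: a(1))
      ultimately have "RR S X (insert e c')" by blast
      then show "RR (insert (insert e c) S) X (insert e c')" by (rule RR_mono) (rule subset_insertI)
    qed
  qed
  show ?case using 1 2 by simp
qed

lemma RR_cross:
  assumes "Y \<in> S" "Y \<inter> insert e c = c" "e \<notin> X" "e \<notin> c"
  shows "RR S X (insert e c)"
proof -
  have a: "X \<inter> insert e c \<subseteq> Y \<inter> insert e c" unfolding assms(2) using assms(3) by blast
  have b: "Y \<inter> insert e c = insert e c - {e}" unfolding assms(2) using assms(4) by simp
  have "e \<in> insert e c" by simp
  then show ?thesis unfolding RR_def using a b assms(1) by blast
qed

lemma mf_eq:
  assumes "finite G" "B \<in> G" "A \<subseteq> B" "\<forall>C\<in>G. A \<subseteq> C \<longrightarrow> card C \<le> card B"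
  shows "maxface_size G A = card B"
  unfolding maxface_size_def
  by (rule Max_eqI) (use assms in auto)

lemma mf_ex:
  assumes "finite G" "A \<in> G"
  shows "\<exists>B\<in>G. A \<subseteq> B \<and> maxface_size G A = card B \<and> (\<forall>C\<in>G. A \<subseteq> C \<longrightarrow> card C \<le> card B)"
proof -
  have fin: "finite (card ` {B \<in> G. A \<subseteq> B})" using assms by simp
  have ne: "card ` {B \<in> G. A \<subseteq> B} \<noteq> {}" using assms by auto
  have "maxface_size G A \<in> card ` {B \<in> G. A \<subseteq> B}" unfolding maxface_size_def using Max_in[OF fin ne] .
  then obtain B where B: "B \<in> G" "A \<subseteq> B" "maxface_size G A = card B" by auto
  have "\<forall>C\<in>G. A \<subseteq> C \<longrightarrow> card C \<le> card B"
    using Max_ge[OF fin] B(3) unfolding maxface_size_def by auto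
  then show ?thesis using B by blast
qed

lemma mf_ge: "finite G \<Longrightarrow> A \<in> G \<Longrightarrow> card A \<le> maxface_size G A"
  using mf_ex by fastforce

locale dec =
  fixes Dl Gm :: "'v set set" and e0 :: 'v and R :: "nat set" and e :: "nat \<Rightarrow> 'v"
    and Gs :: "nat \<Rightarrow> 'v set set"
  assumes finG: "finite Gm" and finA: "\<forall>A\<in>Gm. finite A"
  and sub: "\<forall>r\<in>R. Gs r \<subseteq> Gm" and finR: "finite R"
  and e0G: "\<forall>A\<in>Gm. e0 \<notin> A" and eG: "\<forall>r\<in>R. \<forall>A\<in>Gm. e r \<notin> A"
  and e0R: "e0 \<notin> e ` R" and inj: "inj_on e R"
  and D: "Dl = Gm \<union> insert e0 ` Gm \<union> (\<Union>r\<in>R. insert (e r) ` Gs r)"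
begin

lemma finGs: "r \<in> R \<Longrightarrow> finite (Gs r)"
  using sub finG finite_subset by blast

lemma finD: "finite Dl"
  unfolding D using finG finR finGs by auto

lemma cardins: "A \<in> Gm \<Longrightarrow> x \<notin> A \<Longrightarrow> card (insert x A) = card A + 1"
  using finA by simp

lemma sup0:
  assumes "A \<in> Gm" "C \<in> Dl" "A \<subseteq> C"
  shows "\<exists>B'\<in>Gm. A \<subseteq> B' \<and> card C \<le> card B' + 1"
proof -
  from assms(2) consider "C \<in> Gm" | B' where "B' \<in> Gm" "C = insert e0 B'"
    | r B' where "r \<in> R" "B' \<in> Gs r" "C = insert (e r) B'"
    unfolding D by blast
  then show ?thesis
  proof cases
    case 1 then show ?thesis using assms by auto
  next
    case (2 B')
    have "A \<subseteq> B'" using assms(1,3) 2 e0G by blast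
    moreover have "card C \<le> card B' + 1" using 2 by (simp add: card_insert_if finA)
    ultimately show ?thesis using 2 by blast
  next
    case (3 r B')
    have B'G: "B' \<in> Gm" using 3 sub by blast
    have "A \<subseteq> B'" using assms(1,3) 3 eG by blast
    moreover have "card C \<le> card B' + 1" using 3 B'G by (simp add: card_insert_if finA)
    ultimately show ?thesis using B'G by blast
  qed
qed

lemma sup1:
  assumes "B \<in> Gm" "C \<in> Dl" "insert e0 B \<subseteq> C"
  shows "\<exists>B'\<in>Gm. B \<subseteq> B' \<and> C = insert e0 B'"
proof -
  have e0C: "e0 \<in> C" using assms(3) by blast
  from assms(2) consider "C \<in> Gm" | B' where "B' \<in> Gm" "C = insert e0 B'"
    | r B' where "r \<in> R" "B' \<in> Gs r" "C = insert (e r) B'"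
    unfolding D by blast
  then show ?thesis
  proof cases
    case 1 then show ?thesis using e0C e0G by blast
  next
    case (2 B')
    have "B \<subseteq> B'" using assms(1,3) 2 e0G by blast
    then show ?thesis using 2 by blast
  next
    case (3 r B')
    have B'G: "B' \<in> Gm" using 3 sub by blast
    have "e0 \<noteq> e r" using e0R 3 by blast
    then have False using e0C 3 B'G e0G by blast
    then show ?thesis ..
  qed
qed

lemma sup2:
  assumes "r \<in> R" "B \<in> Gs r" "C \<in> Dl" "insert (e r) B \<subseteq> C"
  shows "\<exists>B'\<in>Gs r. B \<subseteq> B' \<and> C = insert (e r) B'"
proof -
  have eC: "e r \<in> C" using assms(4) by blast
  have BG: "B \<in> Gm" using assms(1,2) sub by blast
  from assms(3) consider "C \<in> Gm" | B' where "B' \<in> Gm" "C = insert e0 B'"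
    | r' B' where "r' \<in> R" "B' \<in> Gs r'" "C = insert (e r') B'"
    unfolding D by blast
  then show ?thesis
  proof cases
    case 1 then show ?thesis using eC eG assms(1) by blast
  next
    case (2 B')
    have "e0 \<noteq> e r" using e0R assms(1) by blast
    then have False using eC 2 eG assms(1) by blast
    then show ?thesis ..
  next
    case (3 r' B')
    have B'G: "B' \<in> Gm" using 3 sub by blast
    have "e r = e r'"
    proof (rule ccontr)
      assume "e r \<noteq> e r'"
      then have "e r \<in> B'" using eC 3 by blast
      then show False using eG assms(1) B'G by blast
    qed
    then have rr: "r = r'" using inj assms(1) 3(1) inj_on_eq_iff by metis
    have "B \<subseteq> B'" using assms(4) 3 rr BG eG assms(1) by blast
    then show ?thesis using 3 rr by blast
  qed
qed

lemma inD0: "A \<in> Gm \<Longrightarrow> A \<in> Dl" unfolding D by blast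
lemma inD1: "A \<in> Gm \<Longrightarrow> insert e0 A \<in> Dl" unfolding D by blast
lemma inD2: "r \<in> R \<Longrightarrow> A \<in> Gs r \<Longrightarrow> insert (e r) A \<in> Dl" unfolding D by blast

lemma mf0: assumes "A \<in> Gm" shows "maxface_size Dl A = maxface_size Gm A + 1"
proof -
  obtain B where B: "B\<in>Gm" "A \<subseteq> B" "maxface_size Gm A = card B" "\<forall>C\<in>Gm. A \<subseteq> C \<longrightarrow> card C \<le> card B"
    using mf_ex[OF finG assms] by blast
  have "maxface_size Dl A = card (insert e0 B)"
  proof (rule mf_eq[OF finD inD1[OF B(1)]])
    show "A \<subseteq> insert e0 B" using B by blast
    show "\<forall>C\<in>Dl. A \<subseteq> C \<longrightarrow> card C \<le> card (insert e0 B)"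
    proof (intro ballI impI)
      fix C assume "C \<in> Dl" "A \<subseteq> C"
      then obtain B' where "B'\<in>Gm" "A \<subseteq> B'" "card C \<le> card B' + 1" using sup0 assms by blast
      then show "card C \<le> card (insert e0 B)" using B(1,4) cardins e0G by fastforce
    qed
  qed
  then show ?thesis using B(1,3) cardins e0G by simp
qed

lemma mf1: assumes "B \<in> Gm" shows "maxface_size Dl (insert e0 B) = maxface_size Gm B + 1"
proof -
  obtain B1 where B1: "B1\<in>Gm" "B \<subseteq> B1" "maxface_size Gm B = card B1" "\<forall>C\<in>Gm. B \<subseteq> C \<longrightarrow> card C \<le> card B1"
    using mf_ex[OF finG assms] by blast
  have "maxface_size Dl (insert e0 B) = card (insert e0 B1)"
  proof (rule mf_eq[OF finD inD1[OF B1(1)]])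
    show "insert e0 B \<subseteq> insert e0 B1" using B1 by blast
    show "\<forall>C\<in>Dl. insert e0 B \<subseteq> C \<longrightarrow> card C \<le> card (insert e0 B1)"
    proof (intro ballI impI)
      fix C assume "C \<in> Dl" "insert e0 B \<subseteq> C"
      then obtain B' where "B'\<in>Gm" "B \<subseteq> B'" "C = insert e0 B'" using sup1 assms by blast
      then show "card C \<le> card (insert e0 B1)" using B1(1,4) cardins e0G by fastforce
    qed
  qed
  then show ?thesis using B1(1,3) cardins e0G by simp
qed

lemma mf2: assumes "r \<in> R" "B \<in> Gs r" shows "maxface_size Dl (insert (e r) B) = maxface_size (Gs r) B + 1"
proof -
  obtain B1 where B1: "B1\<in>Gs r" "B \<subseteq> B1" "maxface_size (Gs r) B = card B1" "\<forall>C\<in>Gs r. B \<subseteq> C \<longrightarrow> card C \<le> card B1"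
    using mf_ex[OF finGs[OF assms(1)] assms(2)] by blast
  have B1G: "B1 \<in> Gm" using B1(1) sub assms(1) by blast
  have "maxface_size Dl (insert (e r) B) = card (insert (e r) B1)"
  proof (rule mf_eq[OF finD inD2[OF assms(1) B1(1)]])
    show "insert (e r) B \<subseteq> insert (e r) B1" using B1 by blast
    show "\<forall>C\<in>Dl. insert (e r) B \<subseteq> C \<longrightarrow> card C \<le> card (insert (e r) B1)"
    proof (intro ballI impI)
      fix C assume "C \<in> Dl" "insert (e r) B \<subseteq> C"
      then obtain B' where B': "B'\<in>Gs r" "B \<subseteq> B'" "C = insert (e r) B'" using sup2 assms by blast
      have "B' \<in> Gm" using B'(1) sub assms(1) by blast
      then show "card C \<le> card (insert (e r) B1)" using B' B1(4) B1G cardins eG assms(1) by fastforce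
    qed
  qed
  then show ?thesis using B1(3) B1G cardins eG assms(1) by simp
qed


lemma ins_inj: "A \<in> Gm \<Longrightarrow> B \<in> Gm \<Longrightarrow> x \<notin> A \<Longrightarrow> x \<notin> B \<Longrightarrow> insert x A = insert x B \<Longrightarrow> A = B"
  by (metis Diff_insert_absorb)

lemma facets_dec: "facets Dl = insert e0 ` facets Gm \<union> (\<Union>r\<in>R. insert (e r) ` facets (Gs r))"
proof (rule set_eqI)
  fix F
  show "F \<in> facets Dl \<longleftrightarrow> F \<in> insert e0 ` facets Gm \<union> (\<Union>r\<in>R. insert (e r) ` facets (Gs r))"
  proof
    assume F: "F \<in> facets Dl"
    then have FD: "F \<in> Dl" and Fmax: "\<forall>G\<in>Dl. F \<subseteq> G \<longrightarrow> G = F" unfolding facets_def by auto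
    from FD consider "F \<in> Gm" | B where "B \<in> Gm" "F = insert e0 B"
      | r B where "r \<in> R" "B \<in> Gs r" "F = insert (e r) B"
      unfolding D by blast
    then show "F \<in> insert e0 ` facets Gm \<union> (\<Union>r\<in>R. insert (e r) ` facets (Gs r))"
    proof cases
      case 1
      have "insert e0 F = F" using Fmax inD1[OF 1] by blast
      then have False using e0G 1 by blast
      then show ?thesis ..
    next
      case (2 B)
      have "B \<in> facets Gm" unfolding facets_def
      proof (intro CollectI conjI ballI impI)
        show "B \<in> Gm" by fact
        fix G assume G: "G \<in> Gm" "B \<subseteq> G"
        have "insert e0 G = F" using Fmax inD1[OF G(1)] G(2) 2(2) by blast
        then show "G = B" using ins_inj[OF G(1) 2(1)] e0G G(1) 2 by blast
      qed
      then show ?thesis using 2 by blast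
    next
      case (3 r B)
      have BG: "B \<in> Gm" using 3 sub by blast
      have "B \<in> facets (Gs r)" unfolding facets_def
      proof (intro CollectI conjI ballI impI)
        show "B \<in> Gs r" by fact
        fix G assume G: "G \<in> Gs r" "B \<subseteq> G"
        have GG: "G \<in> Gm" using G 3 sub by blast
        have "insert (e r) G = F" using Fmax inD2[OF 3(1) G(1)] G(2) 3(3) by blast
        then show "G = B" using ins_inj[OF GG BG] eG 3 GG BG by blast
      qed
      then show ?thesis using 3 by blast
    qed
  next
    assume "F \<in> insert e0 ` facets Gm \<union> (\<Union>r\<in>R. insert (e r) ` facets (Gs r))"
    then consider B where "B \<in> facets Gm" "F = insert e0 B"
      | r B where "r \<in> R" "B \<in> facets (Gs r)" "F = insert (e r) B" by blast
    then show "F \<in> facets Dl"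
    proof cases
      case (1 B)
      have B: "B \<in> Gm" "\<forall>G\<in>Gm. B \<subseteq> G \<longrightarrow> G = B" using 1 unfolding facets_def by auto
      show ?thesis unfolding facets_def
      proof (intro CollectI conjI ballI impI)
        show "F \<in> Dl" using inD1[OF B(1)] 1 by simp
        fix G assume G: "G \<in> Dl" "F \<subseteq> G"
        then obtain B' where "B' \<in> Gm" "B \<subseteq> B'" "G = insert e0 B'" using sup1[OF B(1)] 1 by blast
        then show "G = F" using B(2) 1 by blast
      qed
    next
      case (2 r B)
      have B: "B \<in> Gs r" "\<forall>G\<in>Gs r. B \<subseteq> G \<longrightarrow> G = B" using 2 unfolding facets_def by auto
      show ?thesis unfolding facets_def
      proof (intro CollectI conjI ballI impI)
        show "F \<in> Dl" using inD2[OF 2(1) B(1)] 2 by simp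
        fix G assume G: "G \<in> Dl" "F \<subseteq> G"
        then obtain B' where "B' \<in> Gs r" "B \<subseteq> B'" "G = insert (e r) B'" using sup2[OF 2(1) B(1)] 2 by blast
        then show "G = F" using B(2) 2 by blast
      qed
    qed
  qed
qed

definition SS :: "'v set set \<Rightarrow> int \<Rightarrow> int \<Rightarrow> 'v set set" where
  "SS G i j = {A \<in> G. int (card A) = j \<and> int (maxface_size G A) = i}"

lemma ftri_SS: "ftri G i j = card (SS G i j)" unfolding ftri_def SS_def ..

lemma SS_dec: "SS Dl i j = SS Gm (i-1) j \<union> insert e0 ` SS Gm (i-1) (j-1) \<union> (\<Union>r\<in>R. insert (e r) ` SS (Gs r) (i-1) (j-1))"
proof (rule set_eqI)
  fix A
  show "A \<in> SS Dl i j \<longleftrightarrow> A \<in> SS Gm (i-1) j \<union> insert e0 ` SS Gm (i-1) (j-1) \<union> (\<Union>r\<in>R. insert (e r) ` SS (Gs r) (i-1) (j-1))"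
  proof
    assume "A \<in> SS Dl i j"
    then have AD: "A \<in> Dl" and c: "int (card A) = j" "int (maxface_size Dl A) = i" unfolding SS_def by auto
    from AD consider "A \<in> Gm" | B where "B \<in> Gm" "A = insert e0 B"
      | r B where "r \<in> R" "B \<in> Gs r" "A = insert (e r) B"
      unfolding D by blast
    then show "A \<in> SS Gm (i-1) j \<union> insert e0 ` SS Gm (i-1) (j-1) \<union> (\<Union>r\<in>R. insert (e r) ` SS (Gs r) (i-1) (j-1))"
    proof cases
      case 1 then show ?thesis using c mf0[OF 1] unfolding SS_def by auto
    next
      case (2 B)
      have "B \<in> SS Gm (i-1) (j-1)" using c mf1[OF 2(1)] cardins[OF 2(1)] e0G 2 unfolding SS_def by auto
      then show ?thesis using 2 by blast
    next
      case (3 r B)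
      have BG: "B \<in> Gm" using 3 sub by blast
      have "B \<in> SS (Gs r) (i-1) (j-1)" using c mf2[OF 3(1,2)] cardins[OF BG] eG 3 BG unfolding SS_def by auto
      then show ?thesis using 3 by blast
    qed
  next
    assume "A \<in> SS Gm (i-1) j \<union> insert e0 ` SS Gm (i-1) (j-1) \<union> (\<Union>r\<in>R. insert (e r) ` SS (Gs r) (i-1) (j-1))"
    then consider "A \<in> SS Gm (i-1) j" | B where "B \<in> SS Gm (i-1) (j-1)" "A = insert e0 B"
      | r B where "r \<in> R" "B \<in> SS (Gs r) (i-1) (j-1)" "A = insert (e r) B" by blast
    then show "A \<in> SS Dl i j"
    proof cases
      case 1
      then have AG: "A \<in> Gm" unfolding SS_def by simp
      show ?thesis using 1 mf0[OF AG] inD0[OF AG] unfolding SS_def by auto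
    next
      case (2 B)
      then have BG: "B \<in> Gm" unfolding SS_def by simp
      show ?thesis using 2 mf1[OF BG] inD1[OF BG] cardins[OF BG] e0G BG unfolding SS_def by auto
    next
      case (3 r B)
      then have BG': "B \<in> Gs r" unfolding SS_def by simp
      have BG: "B \<in> Gm" using 3 BG' sub by blast
      show ?thesis using 3 mf2[OF 3(1) BG'] inD2[OF 3(1) BG'] cardins[OF BG] eG BG unfolding SS_def by auto
    qed
  qed
qed

lemma ftri_dec: "ftri Dl i j = ftri Gm (i-1) j + ftri Gm (i-1) (j-1) + (\<Sum>r\<in>R. ftri (Gs r) (i-1) (j-1))"
proof -
  have finSS: "finite (SS G a b)" if "finite G" for G :: "'v set set" and a b unfolding SS_def using that by simp
  have SSsub: "SS G a b \<subseteq> G" for G :: "'v set set" and a b unfolding SS_def by auto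
  have injx: "inj_on (insert x) S" if "S \<subseteq> Gm" "\<forall>A\<in>S. x \<notin> A" for x S
    unfolding inj_on_def
  proof (intro ballI impI)
    fix A B assume "A \<in> S" "B \<in> S" "insert x A = insert x B"
    then show "A = B" using ins_inj[of A B x] that by (meson subsetD)
  qed
  have c1: "card (insert e0 ` SS Gm (i-1) (j-1)) = card (SS Gm (i-1) (j-1))"
  proof (rule card_image, rule injx)
    show "SS Gm (i-1) (j-1) \<subseteq> Gm" by (rule SSsub)
    show "\<forall>A\<in>SS Gm (i-1) (j-1). e0 \<notin> A" using SSsub e0G by (meson subsetD)
  qed
  have c2: "card (insert (e r) ` SS (Gs r) (i-1) (j-1)) = card (SS (Gs r) (i-1) (j-1))" if "r \<in> R" for r
  proof (rule card_image, rule injx)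
    show s1: "SS (Gs r) (i-1) (j-1) \<subseteq> Gm" using SSsub sub that by (meson order_trans)
    show "\<forall>A\<in>SS (Gs r) (i-1) (j-1). e r \<notin> A" using s1 eG that by (meson subsetD)
  qed
  have cU: "card (\<Union>r\<in>R. insert (e r) ` SS (Gs r) (i-1) (j-1)) = (\<Sum>r\<in>R. card (insert (e r) ` SS (Gs r) (i-1) (j-1)))"
  proof (rule card_UN_disjoint[OF finR])
    show "\<forall>r\<in>R. finite (insert (e r) ` SS (Gs r) (i - 1) (j - 1))" using finSS finGs by simp
    show "\<forall>r\<in>R. \<forall>r'\<in>R. r \<noteq> r' \<longrightarrow> insert (e r) ` SS (Gs r) (i - 1) (j - 1) \<inter> insert (e r') ` SS (Gs r') (i - 1) (j - 1) = {}"
    proof (intro ballI impI)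
      fix r r' assume rr: "r \<in> R" "r' \<in> R" "r \<noteq> r'"
      then have ne: "e r \<noteq> e r'" using inj inj_on_eq_iff by metis
      show "insert (e r) ` SS (Gs r) (i - 1) (j - 1) \<inter> insert (e r') ` SS (Gs r') (i - 1) (j - 1) = {}"
      proof (rule equals0I)
        fix C assume "C \<in> insert (e r) ` SS (Gs r) (i - 1) (j - 1) \<inter> insert (e r') ` SS (Gs r') (i - 1) (j - 1)"
        then obtain B B' where B: "B \<in> Gs r" "C = insert (e r) B" "B' \<in> Gs r'" "C = insert (e r') B'"
          unfolding SS_def by auto
        have "B' \<in> Gm" using B(3) rr(2) sub by blast
        then have "e r \<notin> B'" using eG rr by blast
        moreover have "e r \<in> insert (e r') B'" using B(2,4) by (metis insertI1)
        ultimately show False using ne by blast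
      qed
    qed
  qed
  have d1: "SS Gm (i-1) j \<inter> insert e0 ` SS Gm (i-1) (j-1) = {}"
  proof (rule equals0I)
    fix C assume C: "C \<in> SS Gm (i-1) j \<inter> insert e0 ` SS Gm (i-1) (j-1)"
    then have "C \<in> Gm" "e0 \<in> C" unfolding SS_def by auto
    then show False using e0G by blast
  qed
  have d2: "(SS Gm (i-1) j \<union> insert e0 ` SS Gm (i-1) (j-1)) \<inter> (\<Union>r\<in>R. insert (e r) ` SS (Gs r) (i-1) (j-1)) = {}"
  proof (rule equals0I)
    fix C assume C: "C \<in> (SS Gm (i-1) j \<union> insert e0 ` SS Gm (i-1) (j-1)) \<inter> (\<Union>r\<in>R. insert (e r) ` SS (Gs r) (i-1) (j-1))"
    then obtain r B where rB: "r \<in> R" "B \<in> Gs r" "C = insert (e r) B" unfolding SS_def by blast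
    have ein: "e r \<in> C" using rB by blast
    from C consider "C \<in> Gm" | B' where "B' \<in> Gm" "C = insert e0 B'" using SSsub by blast
    then show False
    proof cases
      case 1 then show False using ein eG rB by blast
    next
      case (2 B')
      have "e r \<noteq> e0" using e0R rB by blast
      then show False using ein 2 eG rB by blast
    qed
  qed
  have "ftri Dl i j = card (SS Dl i j)" by (rule ftri_SS)
  also have "\<dots> = card (SS Gm (i-1) j) + card (insert e0 ` SS Gm (i-1) (j-1)) + card (\<Union>r\<in>R. insert (e r) ` SS (Gs r) (i-1) (j-1))"
  proof -
    have f1: "finite (SS Gm (i-1) j)" "finite (SS Gm (i-1) (j-1))" using finSS finG by auto
    have f2: "finite (\<Union>r\<in>R. insert (e r) ` SS (Gs r) (i-1) (j-1))"
      using finR finSS finGs by simp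
    have "card (SS Dl i j) = card (SS Gm (i-1) j \<union> insert e0 ` SS Gm (i-1) (j-1) \<union> (\<Union>r\<in>R. insert (e r) ` SS (Gs r) (i-1) (j-1)))"
      by (simp only: SS_dec)
    also have "\<dots> = card (SS Gm (i-1) j \<union> insert e0 ` SS Gm (i-1) (j-1)) + card (\<Union>r\<in>R. insert (e r) ` SS (Gs r) (i-1) (j-1))"
      by (rule card_Un_disjoint) (use f1 f2 d2 in simp_all)
    also have "card (SS Gm (i-1) j \<union> insert e0 ` SS Gm (i-1) (j-1)) = card (SS Gm (i-1) j) + card (insert e0 ` SS Gm (i-1) (j-1))"
      by (rule card_Un_disjoint) (use f1 d1 in simp_all)
    finally show ?thesis .
  qed
  also have "\<dots> = ftri Gm (i-1) j + ftri Gm (i-1) (j-1) + (\<Sum>r\<in>R. ftri (Gs r) (i-1) (j-1))"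
    unfolding ftri_SS c1 cU using c2 by simp
  finally show ?thesis .
qed

end

definition hc :: "int \<Rightarrow> int \<Rightarrow> int \<Rightarrow> int" where
  "hc i j k = (-1) ^ nat (j - k) * int (nat (i - k) choose nat (j - k))"

lemma htri_hc: "htri G i j = (\<Sum>k\<in>{0..j}. hc i j k * int (ftri G i k))"
  unfolding htri_def hc_def by simp

lemma ftri_neg: "k < 0 \<Longrightarrow> ftri G i k = 0"
  unfolding ftri_def by auto

lemma ftri_big: assumes "finite G" "k > i" shows "ftri G i k = 0"
proof -
  have "{A \<in> G. int (card A) = k \<and> int (maxface_size G A) = i} = {}"
    using mf_ge[OF assms(1)] assms(2) by fastforce
  then show ?thesis unfolding ftri_def by (metis card.empty)
qed

lemma shift_sum: "(\<Sum>k\<in>{0..j}. f (k - 1)) = (\<Sum>m\<in>{-1..j-1::int}. f m)"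
proof -
  have "(\<Sum>m\<in>{-1..j-1::int}. f m) = (\<Sum>k\<in>{0..j}. f (k - 1))"
    by (rule sum.reindex_bij_witness[of _ "\<lambda>k. k - 1" "\<lambda>m. m + 1"]) auto
  then show ?thesis by simp
qed

lemma L2:
  fixes g :: "int \<Rightarrow> int"
  assumes "g (-1) = 0"
  shows "(\<Sum>k\<in>{0..j}. hc i j k * g (k-1)) = (\<Sum>k\<in>{0..j-1}. hc (i-1) (j-1) k * g k)"
proof -
  have "(\<Sum>k\<in>{0..j}. hc i j k * g (k-1)) = (\<Sum>k\<in>{0..j}. hc i j ((k - 1) + 1) * g (k-1))" by simp
  also have "\<dots> = (\<Sum>m\<in>{-1..j-1}. hc i j (m + 1) * g m)" by (rule shift_sum)
  also have "\<dots> = (\<Sum>m\<in>{0..j-1}. hc i j (m + 1) * g m)"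
  proof (cases "j \<ge> 0")
    case True
    then have "{-1..j-1} = insert (-1) {0..j-1::int}" by auto
    then show ?thesis using assms by simp
  next
    case False
    then show ?thesis by simp
  qed
  also have "\<dots> = (\<Sum>k\<in>{0..j-1}. hc (i-1) (j-1) k * g k)"
    by (rule sum.cong) (auto simp: hc_def algebra_simps)
  finally show ?thesis .
qed

lemma hc_step:
  assumes "0 \<le> k" "k < j" "k \<le> i - 1"
  shows "hc i j k + hc i j (k + 1) = hc (i-1) j k"
proof -
  define a where "a = nat (i - 1 - k)"
  define m where "m = nat (j - 1 - k)"
  have 1: "nat (i - k) = Suc a" "nat (j - k) = Suc m" "nat (i - (k+1)) = a" "nat (j - (k+1)) = m"
    "nat (i - 1 - k) = a" "nat (j - k) = Suc m"
    using assms unfolding a_def m_def by auto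
  have "hc i j k + hc i j (k + 1) = (-1) ^ Suc m * int (Suc a choose Suc m) + (-1) ^ m * int (a choose m)"
    unfolding hc_def 1 by simp
  also have "\<dots> = (-1) ^ Suc m * int (a choose Suc m)"
    by (simp add: algebra_simps)
  also have "\<dots> = hc (i-1) j k" unfolding hc_def using 1 by (simp add: algebra_simps)
  finally show ?thesis .
qed

lemma L1:
  fixes g :: "int \<Rightarrow> int"
  assumes "g (-1) = 0" "\<forall>k. k > i - 1 \<longrightarrow> g k = 0"
  shows "(\<Sum>k\<in>{0..j}. hc i j k * (g k + g (k-1))) = (\<Sum>k\<in>{0..j}. hc (i-1) j k * g k)"
proof (cases "j \<ge> 0")
  case False
  then show ?thesis by simp
next
  case True
  have ins: "{0..j} = insert j {0..j-1}" using True by auto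
  have "(\<Sum>k\<in>{0..j}. hc i j k * (g k + g (k-1))) = (\<Sum>k\<in>{0..j}. hc i j k * g k) + (\<Sum>k\<in>{0..j}. hc i j k * g (k-1))"
    by (simp add: algebra_simps sum.distrib)
  also have "(\<Sum>k\<in>{0..j}. hc i j k * g (k-1)) = (\<Sum>k\<in>{0..j}. hc i j ((k - 1) + 1) * g (k-1))" by simp
  also have "\<dots> = (\<Sum>m\<in>{-1..j-1}. hc i j (m + 1) * g m)" by (rule shift_sum)
  also have "\<dots> = (\<Sum>m\<in>{0..j-1}. hc i j (m + 1) * g m)"
  proof -
    have "{-1..j-1} = insert (-1) {0..j-1::int}" using True by auto
    then show ?thesis using assms by simp
  qed
  also have "(\<Sum>k\<in>{0..j}. hc i j k * g k) = hc i j j * g j + (\<Sum>k\<in>{0..j-1}. hc i j k * g k)"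
    unfolding ins by simp
  finally have "(\<Sum>k\<in>{0..j}. hc i j k * (g k + g (k-1))) = hc i j j * g j + (\<Sum>k\<in>{0..j-1}. (hc i j k + hc i j (k+1)) * g k)"
    by (simp add: algebra_simps sum.distrib)
  also have "(\<Sum>k\<in>{0..j-1}. (hc i j k + hc i j (k+1)) * g k) = (\<Sum>k\<in>{0..j-1}. hc (i-1) j k * g k)"
  proof (rule sum.cong)
    fix k assume k: "k \<in> {0..j-1}"
    show "(hc i j k + hc i j (k+1)) * g k = hc (i-1) j k * g k"
    proof (cases "k \<le> i - 1")
      case True
      then show ?thesis using hc_step[of k j i] k by simp
    next
      case False
      then show ?thesis using assms(2) by simp
    qed
  qed simp
  also have "hc i j j = hc (i-1) j j" unfolding hc_def by simp
  also have "hc (i-1) j j * g j + (\<Sum>k\<in>{0..j-1}. hc (i-1) j k * g k) = (\<Sum>k\<in>{0..j}. hc (i-1) j k * g k)"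
    unfolding ins by simp
  finally show ?thesis .
qed

context dec begin

lemma htri_dec: "htri Dl i j = htri Gm (i-1) j + (\<Sum>r\<in>R. htri (Gs r) (i-1) (j-1))"
proof -
  define g where "g k = int (ftri Gm (i-1) k)" for k
  define gs where "gs r k = int (ftri (Gs r) (i-1) k)" for r k
  have "htri Dl i j = (\<Sum>k\<in>{0..j}. hc i j k * (g k + g (k-1) + (\<Sum>r\<in>R. gs r (k-1))))"
    unfolding htri_hc g_def gs_def ftri_dec by simp
  also have "\<dots> = (\<Sum>k\<in>{0..j}. hc i j k * (g k + g (k-1))) + (\<Sum>r\<in>R. (\<Sum>k\<in>{0..j}. hc i j k * gs r (k-1)))"
    by (simp add: algebra_simps sum.distrib sum_distrib_left sum.swap[of _ R])
  also have "(\<Sum>k\<in>{0..j}. hc i j k * (g k + g (k-1))) = (\<Sum>k\<in>{0..j}. hc (i-1) j k * g k)"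
  proof (rule L1)
    show "g (-1) = 0" unfolding g_def by (simp add: ftri_neg)
    show "\<forall>k. k > i - 1 \<longrightarrow> g k = 0" unfolding g_def using ftri_big[OF finG] by simp
  qed
  also have "(\<Sum>r\<in>R. (\<Sum>k\<in>{0..j}. hc i j k * gs r (k-1))) = (\<Sum>r\<in>R. (\<Sum>k\<in>{0..j-1}. hc (i-1) (j-1) k * gs r k))"
    by (rule sum.cong[OF refl], rule L2) (simp add: gs_def ftri_neg)
  finally show ?thesis unfolding htri_hc g_def gs_def .
qed

end

lemma path_nth:
  assumes "rtrancl_path r x xs y"
  shows "(\<forall>i<length xs. r ((x#xs)!i) (xs!i)) \<and> (x#xs)!length xs = y"
  using assms
proof (induction rule: rtrancl_path.induct)
  case (base x)
  then show ?case by simp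
next
  case (step x y ys z)
  show ?case
  proof (intro conjI allI impI)
    fix i assume i: "i < length (y # ys)"
    show "r ((x # y # ys) ! i) ((y # ys) ! i)"
    proof (cases i)
      case 0 then show ?thesis using step by simp
    next
      case (Suc i') then show ?thesis using step i by simp
    qed
  next
    show "(x # y # ys) ! length (y # ys) = z" using step by simp
  qed
qed

lemma tree_path:
  assumes nc: "\<not> has_ucycle E" and GE: "G \<subseteq> E" and xy: "(x,y) \<notin> G" "x \<noteq> y" and yx: "uadj E y x"
  shows "(x,y) \<notin> G\<^sup>*"
proof
  assume "(x,y) \<in> G\<^sup>*"
  then have "(\<lambda>a b. (a,b) \<in> G)\<^sup>*\<^sup>* x y" by (simp add: rtranclp_rtrancl_eq)
  then obtain xs where "rtrancl_path (\<lambda>a b. (a,b) \<in> G) x xs y" using rtranclp_eq_rtrancl_path by metis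
  then obtain xs' where P: "rtrancl_path (\<lambda>a b. (a,b) \<in> G) x xs' y" and dist: "distinct (x # xs')"
    using rtrancl_path_distinct by metis
  have pn: "\<forall>i<length xs'. ((x#xs')!i, xs'!i) \<in> G" "(x#xs')!length xs' = y"
    using path_nth[OF P] by auto
  have "xs' \<noteq> []" using pn(2) xy(2) by auto
  moreover have "length xs' \<noteq> 1"
  proof
    assume "length xs' = 1"
    then have "(x, y) \<in> G" using pn by (metis One_nat_def lessI nth_Cons_0 nth_Cons_Suc)
    then show False using xy(1) by simp
  qed
  ultimately have len: "length xs' \<ge> 2"
    by (metis One_nat_def Suc_1 length_0_conv less_2_cases not_le_imp_less)
  define cs where "cs = x # xs'"
  have "has_ucycle E" unfolding has_ucycle_def
  proof (intro exI[of _ cs] conjI allI impI)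
    show "3 \<le> length cs" using len cs_def by simp
    show "distinct cs" using dist cs_def by simp
    fix i assume i: "i < length cs"
    show "uadj E (cs ! i) (cs ! (Suc i mod length cs))"
    proof (cases "i < length xs'")
      case True
      then have "Suc i mod length cs = Suc i" using cs_def by simp
      moreover have "(cs!i, cs!Suc i) \<in> E" using pn(1) True GE cs_def by auto
      ultimately show ?thesis unfolding uadj_def by simp
    next
      case False
      then have ii: "i = length xs'" using i cs_def by simp
      then have "Suc i mod length cs = 0" using cs_def by simp
      moreover have "cs ! i = y" using pn(2) ii cs_def by simp
      moreover have "cs ! 0 = x" using cs_def by simp
      ultimately show ?thesis using yx unfolding uadj_def by auto
    qed
  qed
  then show False using nc by simp
qed

lemma df_sub: "directed_forest E A \<Longrightarrow> B \<subseteq> A \<Longrightarrow> B \<subseteq> E2 \<Longrightarrow> directed_forest E2 B"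
  unfolding directed_forest_def using acyclic_subset by blast

lemma df_insert:
  assumes "directed_forest E2 A" "E2 \<subseteq> E" "(a,b) \<in> E" "\<forall>u. (u,b) \<notin> A" "(b,a) \<notin> A\<^sup>*"
  shows "directed_forest E (insert (a,b) A)"
  using assms unfolding directed_forest_def by (simp, blast)

lemma Delta_mono: "E1 \<subseteq> E2 \<Longrightarrow> Delta E1 \<subseteq> Delta E2"
  unfolding Delta_def directed_forest_def by auto

lemma Delta_fin: "finite E \<Longrightarrow> finite (Delta E)"
proof -
  assume "finite E"
  moreover have "Delta E \<subseteq> Pow E" unfolding Delta_def directed_forest_def by auto
  ultimately show ?thesis using finite_subset by blast
qed

lemma Delta_finA: "finite E \<Longrightarrow> \<forall>A\<in>Delta E. finite A"
  unfolding Delta_def directed_forest_def using finite_subset by blast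

lemma facet_ex:
  assumes "finite E" "A \<in> Delta E"
  shows "\<exists>F\<in>facets (Delta E). A \<subseteq> F"
proof -
  have fin: "finite {B \<in> Delta E. A \<subseteq> B}" using Delta_fin[OF assms(1)] by simp
  have "{B \<in> Delta E. A \<subseteq> B} \<noteq> {}" using assms(2) by blast
  then obtain m where m: "m \<in> {B \<in> Delta E. A \<subseteq> B}" "\<forall>b\<in>{B \<in> Delta E. A \<subseteq> B}. m \<le> b \<longrightarrow> m = b"
    using finite_has_maximal[OF fin] by blast
  have "m \<in> facets (Delta E)" unfolding facets_def
  proof (intro CollectI conjI ballI impI)
    show "m \<in> Delta E" using m by simp
    fix G assume "G \<in> Delta E" "m \<subseteq> G"
    then show "G = m" using m by (metis (mono_tags, lifting) mem_Collect_eq order.trans)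
  qed
  then show ?thesis using m by blast
qed

lemma no_in_rtrancl: "(a, b) \<in> A\<^sup>* \<Longrightarrow> a \<noteq> b \<Longrightarrow> \<exists>u. (u, b) \<in> A"
  by (induction rule: rtrancl.induct) auto

lemma no_out_rtrancl: "(a, b) \<in> A\<^sup>* \<Longrightarrow> a \<noteq> b \<Longrightarrow> \<exists>u. (a, u) \<in> A"
  by (erule converse_rtranclE) auto

lemma two_cycle: "directed_forest E A \<Longrightarrow> (a,b) \<in> A \<Longrightarrow> (b,a) \<notin> A"
  unfolding directed_forest_def acyclic_def
  by (meson trancl.r_into_trancl trancl_into_trancl)

lemma concat_blocks:
  fixes L :: "nat \<Rightarrow> 'v set list" and e :: "nat \<Rightarrow> 'v"
  assumes "\<forall>p<n. sh {} (L p) \<and> distinct (L p)"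
    "\<forall>p<n. \<forall>c\<in>set (L p). \<exists>Y\<in>S0. Y \<inter> insert (e p) c = c"
    "\<forall>p<n. \<forall>q<n. \<forall>c\<in>set (L q). e p \<notin> c"
    "\<forall>p<n. \<forall>X\<in>S0. e p \<notin> X" "inj_on e {..<n}"
  shows "distinct (concat (map (\<lambda>p. map (insert (e p)) (L p)) [0..<n])) \<and> sh S0 (concat (map (\<lambda>p. map (insert (e p)) (L p)) [0..<n]))"
  using assms
proof (induction n)
  case 0
  then show ?case by simp
next
  case (Suc n)
  define C where "C = concat (map (\<lambda>p. map (insert (e p)) (L p)) [0..<n])"
  have IH: "distinct C \<and> sh S0 C"
    unfolding C_def
  proof (rule Suc.IH)
    show "\<forall>p<n. sh {} (L p) \<and> distinct (L p)" using Suc.prems(1) by simp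
    show "\<forall>p<n. \<forall>c\<in>set (L p). \<exists>Y\<in>S0. Y \<inter> insert (e p) c = c" using Suc.prems(2) by simp
    show "\<forall>p<n. \<forall>q<n. \<forall>c\<in>set (L q). e p \<notin> c" using Suc.prems(3) less_SucI by blast
    show "\<forall>p<n. \<forall>X\<in>S0. e p \<notin> X" using Suc.prems(4) by simp
    show "inj_on e {..<n}" using Suc.prems(5) by (rule inj_on_subset) auto
  qed
  have eq: "concat (map (\<lambda>p. map (insert (e p)) (L p)) [0..<Suc n]) = C @ map (insert (e n)) (L n)"
    unfolding C_def by simp
  have enc: "\<forall>c\<in>set (L n). e n \<notin> c" using Suc.prems(3) lessI by blast
  have setC: "X \<in> set C \<Longrightarrow> \<exists>q<n. \<exists>c'\<in>set (L q). X = insert (e q) c'" for X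
    unfolding C_def by auto
  have neq: "q < n \<Longrightarrow> e q \<noteq> e n" for q
    using Suc.prems(5) by (metis inj_on_eq_iff lessThan_iff less_SucI less_irrefl_nat lessI)
  have dist_new: "distinct (map (insert (e n)) (L n))"
  proof -
    have "inj_on (insert (e n)) (set (L n))"
      unfolding inj_on_def using enc by (metis Diff_insert_absorb)
    moreover have "distinct (L n)" using Suc.prems(1) lessI by blast
    ultimately show ?thesis by (simp add: distinct_map)
  qed
  have disj: "set C \<inter> set (map (insert (e n)) (L n)) = {}"
  proof (rule equals0I)
    fix X assume X: "X \<in> set C \<inter> set (map (insert (e n)) (L n))"
    then obtain q c' where qc: "q < n" "c' \<in> set (L q)" "X = insert (e q) c'" using setC by blast
    from X obtain c where c: "c \<in> set (L n)" "X = insert (e n) c" by auto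
    have "e q \<in> insert (e n) c" using qc(3) c(2) by (metis insertI1)
    moreover have "e q \<notin> c" using Suc.prems(3) qc(1) c(1) by (meson less_SucI lessI)
    ultimately show False using neq[OF qc(1)] by simp
  qed
  have sh_new: "sh (S0 \<union> set C) (map (insert (e n)) (L n))"
  proof (rule sh_block[of "{}"])
    show "sh {} (L n)" using Suc.prems(1) lessI by blast
    show "\<forall>c\<in>set (L n). e n \<notin> c" by (rule enc)
    show "insert (e n) ` {} \<subseteq> S0 \<union> set C" by simp
    show "\<forall>c\<in>set (L n). \<forall>X\<in>S0 \<union> set C. X \<notin> insert (e n) ` {} \<longrightarrow> RR (S0 \<union> set C) X (insert (e n) c)"
    proof (intro ballI impI)
      fix c X assume c: "c \<in> set (L n)" and X: "X \<in> S0 \<union> set C"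
      obtain Y where Y: "Y \<in> S0" "Y \<inter> insert (e n) c = c" using Suc.prems(2) c lessI by meson
      have "e n \<notin> X"
      proof (cases "X \<in> S0")
        case True then show ?thesis using Suc.prems(4) lessI by blast
      next
        case False
        then have "X \<in> set C" using X by simp
        then obtain q c' where qc: "q < n" "c' \<in> set (L q)" "X = insert (e q) c'" using setC by blast
        have "e n \<notin> c'" using Suc.prems(3) qc by (meson less_SucI lessI)
        then show ?thesis using qc(3) neq[OF qc(1)] by simp
      qed
      then show "RR (S0 \<union> set C) X (insert (e n) c)"
        using RR_cross[of Y "S0 \<union> set C" "e n" c X] Y enc c by simp
    qed
  qed
  show ?case unfolding eq sh_append using IH dist_new disj sh_new by simp
qed

lemma inter_lemma: "a \<noteq> b \<Longrightarrow> a \<notin> c \<Longrightarrow> b \<notin> H \<Longrightarrow> c \<subseteq> H \<Longrightarrow> insert a H \<inter> insert b c = c"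
  by auto

theorem mainTheorem9:
  fixes V :: "'a set" and E :: "('a \<times> 'a) set" and v x :: 'a
    and ys :: "'a list" and s :: nat
    and Fs Hs :: "('a \<times> 'a) set list" and Gs :: "nat \<Rightarrow> ('a \<times> 'a) set list"
  defines "E' \<equiv> del_vertex_edges E v"
  defines "E0 \<equiv> E' - {(y, x) | y. y \<in> set ys}"
  defines "Ep \<equiv> (\<lambda>p. E0 - {(x, ys ! p)})"
  assumes D: "digraph V E"
    and tree: "essentially_tree V E"
    and two: "card V \<ge> 2"
    and vV: "v \<in> V" and xV: "x \<in> V" and xv: "x \<noteq> v"
    and leaf: "\<forall>e \<in> E. fst e = v \<or> snd e = v \<longrightarrow> e = (v, x) \<or> e = (x, v)"
    and leaf_nonempty: "(v, x) \<in> E \<or> (x, v) \<in> E"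
    and ys_set: "set ys = {y. (y, x) \<in> E'}"
    and ys_dist: "distinct ys"
    and s_le: "s \<le> length ys"
    and ys_s: "\<forall>i < length ys. (x, ys ! i) \<in> E \<longleftrightarrow> i < s"
    and Fs: "shelling_order (Delta E') Fs"
    and Hs: "shelling_order (Delta E0) Hs"
    and Gs: "\<forall>p < length ys. shelling_order (Delta (Ep p)) (Gs p)"
  shows
    "((x, v) \<in> E \<and> (v, x) \<notin> E \<longrightarrow>
        shelling_order (Delta E) (map (insert (x, v)) Fs) \<and>
        (\<forall>i j :: int. htri (Delta E) i j = htri (Delta E') (i - 1) j))
   \<and> ((x, v) \<notin> E \<and> (v, x) \<in> E \<longrightarrow>
        shelling_order (Delta E)
          (map (insert (v, x)) Hs @
           concat (map (\<lambda>p. map (insert (ys ! p, x)) (Gs p)) [0..<length ys])) \<and>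
        (\<forall>i j :: int. htri (Delta E) i j =
           htri (Delta E0) (i - 1) j + (\<Sum>p < length ys. htri (Delta (Ep p)) (i - 1) (j - 1))))
   \<and> ((x, v) \<in> E \<and> (v, x) \<in> E \<longrightarrow>
        shelling_order (Delta E) (map (insert (x, v)) Fs @ map (insert (v, x)) Hs) \<and>
        (\<forall>i j :: int. htri (Delta E) i j =
           htri (Delta E') (i - 1) j + htri (Delta E0) (i - 1) (j - 1)))"
proof -
  have finV: "finite V" and EV: "E \<subseteq> V \<times> V" and nl: "\<forall>u. (u,u) \<notin> E"
    using D unfolding digraph_def by auto
  have finE: "finite E" using finV EV by (meson finite_SigmaI finite_subset)
  have nc: "\<not> has_ucycle E" using tree unfolding essentially_tree_def by simp
  have E'_eq: "E' = {e \<in> E. fst e \<noteq> v \<and> snd e \<noteq> v}" unfolding E'_def del_vertex_edges_def ..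
  have E'E: "E' \<subseteq> E" unfolding E'_eq by blast
  have E0_eq: "E0 = {e \<in> E'. snd e \<noteq> x}"
  proof (rule set_eqI)
    fix e show "e \<in> E0 \<longleftrightarrow> e \<in> {e \<in> E'. snd e \<noteq> x}"
      unfolding E0_def using ys_set by (cases e) auto
  qed
  have E0E': "E0 \<subseteq> E'" unfolding E0_eq by blast
  have E0E: "E0 \<subseteq> E" using E0E' E'E by blast
  have EpE0: "Ep p \<subseteq> E0" for p unfolding Ep_def by blast
  have EpE: "Ep p \<subseteq> E" for p using EpE0 E0E by blast
  have finE': "finite E'" using finE E'E finite_subset by blast
  have finE0: "finite E0" using finE E0E finite_subset by blast
  have finEp: "finite (Ep p)" for p using finE EpE finite_subset by blast
  have nov: "\<And>a b. (a,b) \<in> E' \<Longrightarrow> a \<noteq> v \<and> b \<noteq> v" unfolding E'_eq by auto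
  have inE': "\<And>a b. (a,b) \<in> E \<Longrightarrow> (a,b) \<noteq> (v,x) \<Longrightarrow> (a,b) \<noteq> (x,v) \<Longrightarrow> (a,b) \<in> E'"
    using leaf unfolding E'_eq by auto
  have nox: "\<And>a b. (a,b) \<in> E0 \<Longrightarrow> b \<noteq> x" unfolding E0_eq by auto
  have ysE': "p < length ys \<Longrightarrow> (ys!p, x) \<in> E'" for p using ys_set nth_mem by blast
  have ysv: "p < length ys \<Longrightarrow> ys!p \<noteq> v" for p using ysE' nov by blast
  have ysx: "p < length ys \<Longrightarrow> ys!p \<noteq> x" for p using ysE' E'E nl by blast
  have Ep_nox: "(x, ys!p) \<notin> Ep p" for p unfolding Ep_def by blast
  have Ep_eq: "Ep p = {e \<in> E'. snd e \<noteq> x \<and> e \<noteq> (x, ys!p)}" for p unfolding Ep_def E0_eq by blast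
  have faceD: "A \<in> Delta F \<Longrightarrow> directed_forest F A" for F A unfolding Delta_def by simp
  have faceI: "directed_forest F A \<Longrightarrow> A \<in> Delta F" for F A unfolding Delta_def by simp
  have face_sub: "A \<in> Delta F \<Longrightarrow> A \<subseteq> F" for F A unfolding Delta_def directed_forest_def by simp
  have indeg: "A \<in> Delta F \<Longrightarrow> (u,w) \<in> A \<Longrightarrow> (u',w) \<in> A \<Longrightarrow> u = u'" for F A u u' w
    unfolding Delta_def directed_forest_def by blast
  have face_subI: "A \<in> Delta F \<Longrightarrow> B \<subseteq> A \<Longrightarrow> B \<subseteq> F2 \<Longrightarrow> B \<in> Delta F2" for F F2 A B
    using df_sub faceD faceI by metis
  have tc: "A \<in> Delta F \<Longrightarrow> (a,b) \<in> A \<Longrightarrow> (b,a) \<notin> A" for F A a b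
    using two_cycle faceD by metis
  have ins_xv: "insert (x,v) A \<in> Delta E" if "(x,v) \<in> E" "A \<in> Delta E'" for A
  proof (rule faceI, rule df_insert[OF faceD[OF that(2)] E'E that(1)])
    show "\<forall>u. (u, v) \<notin> A" using face_sub[OF that(2)] nov by blast
    show "(v, x) \<notin> A\<^sup>*"
    proof
      assume "(v, x) \<in> A\<^sup>*"
      then obtain u where "(v,u) \<in> A" using no_out_rtrancl xv by metis
      then show False using face_sub[OF that(2)] nov by blast
    qed
  qed
  have ins_vx: "insert (v,x) A \<in> Delta E" if "(v,x) \<in> E" "A \<in> Delta E0" for A
  proof (rule faceI, rule df_insert[OF faceD[OF that(2)] E0E that(1)])
    show "\<forall>u. (u, x) \<notin> A" using face_sub[OF that(2)] nox by blast
    show "(x, v) \<notin> A\<^sup>*"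
    proof
      assume "(x, v) \<in> A\<^sup>*"
      then obtain u where "(u,v) \<in> A" using no_in_rtrancl xv by metis
      then show False using face_sub[OF that(2)] E0E' nov by blast
    qed
  qed
  have ins_y: "insert (ys!p, x) A \<in> Delta E" if "p < length ys" "A \<in> Delta (Ep p)" for p A
  proof (rule faceI, rule df_insert[OF faceD[OF that(2)] EpE])
    show "(ys!p, x) \<in> E" using ysE' that(1) E'E by blast
    show "\<forall>u. (u, x) \<notin> A" using face_sub[OF that(2)] EpE0 nox by blast
    show "(x, ys!p) \<notin> A\<^sup>*"
    proof (rule tree_path[OF nc])
      show "A \<subseteq> E" using face_sub[OF that(2)] EpE by blast
      show "(x, ys ! p) \<notin> A" using face_sub[OF that(2)] Ep_nox by blast
      show "x \<noteq> ys ! p" using ysx that(1) by metis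
      show "uadj E (ys ! p) x" unfolding uadj_def using ysE' that(1) E'E by blast
    qed
  qed
  have rem_E': "A \<subseteq> E'" if "A \<in> Delta E" "(x,v) \<notin> A" "(v,x) \<notin> A" for A
  proof
    fix e assume e: "e \<in> A"
    then have "e \<in> E" using face_sub[OF that(1)] by blast
    then show "e \<in> E'" using inE' e that(2,3) by (cases e) metis
  qed
  have rem_E0: "A \<subseteq> E0" if "A \<in> Delta E" "(x,v) \<notin> A" "(v,x) \<notin> A" "\<forall>u. (u,x) \<notin> A" for A
  proof
    fix e assume e: "e \<in> A"
    then have "e \<in> E'" using rem_E'[OF that(1-3)] by blast
    moreover have "snd e \<noteq> x" using e that(4) by (cases e) auto
    ultimately show "e \<in> E0" unfolding E0_eq by blast
  qed
  have DmE'E: "Delta E' \<subseteq> Delta E" using Delta_mono[OF E'E] .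
  have DmE0E: "Delta E0 \<subseteq> Delta E" using Delta_mono[OF E0E] .
  have DmE0E': "Delta E0 \<subseteq> Delta E'" using Delta_mono[OF E0E'] .
  have DmEpE0: "Delta (Ep p) \<subseteq> Delta E0" for p using Delta_mono[OF EpE0] .
  have Fsh: "distinct Fs" "set Fs = facets (Delta E')" "sh {} Fs" using Fs unfolding shelling_iff by auto
  have Hsh: "distinct Hs" "set Hs = facets (Delta E0)" "sh {} Hs" using Hs unfolding shelling_iff by auto
  have Gsh: "distinct (Gs p)" "set (Gs p) = facets (Delta (Ep p))" "sh {} (Gs p)" if "p < length ys" for p
    using Gs that unfolding shelling_iff by auto
  have facets_sub: "facets G \<subseteq> G" for G :: "('a \<times> 'a) set set" unfolding facets_def by blast
  have partA: "shelling_order (Delta E) (map (insert (x, v)) Fs) \<and>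
        (\<forall>i j :: int. htri (Delta E) i j = htri (Delta E') (i - 1) j)"
    if a: "(x, v) \<in> E" "(v, x) \<notin> E"
  proof -
    have DA: "Delta E = Delta E' \<union> insert (x,v) ` Delta E' \<union> (\<Union>r\<in>{}. insert ((\<lambda>_. (x,v)) r) ` (\<lambda>_. {}) r)"
    proof -
      have "Delta E \<subseteq> Delta E' \<union> insert (x,v) ` Delta E'"
      proof
        fix A assume A: "A \<in> Delta E"
        have vxA: "(v,x) \<notin> A" using face_sub[OF A] a(2) by blast
        show "A \<in> Delta E' \<union> insert (x,v) ` Delta E'"
        proof (cases "(x,v) \<in> A")
          case True
          have A'E: "A - {(x,v)} \<in> Delta E" using face_subI[OF A] face_sub[OF A] by blast
          have "A - {(x,v)} \<subseteq> E'" using rem_E'[OF A'E] vxA by blast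
          then have "A - {(x,v)} \<in> Delta E'" using face_subI[OF A] by blast
          moreover have "A = insert (x,v) (A - {(x,v)})" using True by blast
          ultimately show ?thesis by blast
        next
          case False
          then have "A \<subseteq> E'" using rem_E'[OF A] vxA by blast
          then show ?thesis using face_subI[OF A] by blast
        qed
      qed
      moreover have "insert (x,v) ` Delta E' \<subseteq> Delta E" using ins_xv a(1) by blast
      ultimately show ?thesis using DmE'E by blast
    qed
    have decA: "dec (Delta E) (Delta E') (x,v) {} (\<lambda>_. (x,v)) (\<lambda>_. {})"
    proof (rule dec.intro)
      show "finite (Delta E')" using Delta_fin[OF finE'] .
      show "\<forall>A\<in>Delta E'. finite A" using Delta_finA[OF finE'] .
      show "\<forall>r\<in>{}. {} \<subseteq> Delta E'" by simp
      show "finite ({}::nat set)" by simp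
      show "\<forall>A\<in>Delta E'. (x, v) \<notin> A" using face_sub nov by blast
      show "\<forall>r\<in>{}. \<forall>A\<in>Delta E'. (x, v) \<notin> A" by simp
      show "(x, v) \<notin> (\<lambda>_. (x, v)) ` {}" by simp
      show "inj_on (\<lambda>_. (x, v)) {}" by simp
      show "Delta E = Delta E' \<union> insert (x, v) ` Delta E' \<union> (\<Union>r\<in>{}. insert (x, v) ` {})" using DA by simp
    qed
    have fac: "facets (Delta E) = insert (x,v) ` facets (Delta E')"
      using dec.facets_dec[OF decA] by simp
    have h: "\<forall>i j :: int. htri (Delta E) i j = htri (Delta E') (i - 1) j"
      using dec.htri_dec[OF decA] by simp
    have nin: "\<forall>c\<in>set Fs. (x,v) \<notin> c" using Fsh(2) facets_sub face_sub nov by blast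
    have "shelling_order (Delta E) (map (insert (x, v)) Fs)"
      unfolding shelling_iff
    proof (intro conjI)
      show "distinct (map (insert (x, v)) Fs)"
      proof -
        have "inj_on (insert (x,v)) (set Fs)" unfolding inj_on_def using nin by (metis Diff_insert_absorb)
        then show ?thesis using Fsh(1) by (simp add: distinct_map)
      qed
      show "set (map (insert (x, v)) Fs) = facets (Delta E)" using fac Fsh(2) by simp
      show "sh {} (map (insert (x, v)) Fs)"
        by (rule sh_block[of "{}"]) (use Fsh(3) nin in simp_all)
    qed
    then show ?thesis using h by blast
  qed
  have partC: "shelling_order (Delta E) (map (insert (x, v)) Fs @ map (insert (v, x)) Hs) \<and>
        (\<forall>i j :: int. htri (Delta E) i j =
           htri (Delta E') (i - 1) j + htri (Delta E0) (i - 1) (j - 1))"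
    if a: "(x, v) \<in> E" "(v, x) \<in> E"
  proof -
    have DC: "Delta E = Delta E' \<union> insert (x,v) ` Delta E' \<union> (\<Union>r\<in>{0::nat}. insert (v,x) ` Delta E0)"
    proof -
      have "Delta E \<subseteq> Delta E' \<union> insert (x,v) ` Delta E' \<union> insert (v,x) ` Delta E0"
      proof
        fix A assume A: "A \<in> Delta E"
        show "A \<in> Delta E' \<union> insert (x,v) ` Delta E' \<union> insert (v,x) ` Delta E0"
        proof (cases "(x,v) \<in> A")
          case True
          have vxA: "(v,x) \<notin> A" using tc[OF A True] .
          have A'E: "A - {(x,v)} \<in> Delta E" using face_subI[OF A] face_sub[OF A] by blast
          have "A - {(x,v)} \<subseteq> E'" using rem_E'[OF A'E] vxA by blast
          then have "A - {(x,v)} \<in> Delta E'" using face_subI[OF A] by blast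
          moreover have "A = insert (x,v) (A - {(x,v)})" using True by blast
          ultimately show ?thesis by blast
        next
          case False
          note xvA = False
          show ?thesis
          proof (cases "(v,x) \<in> A")
            case True
            have A'E: "A - {(v,x)} \<in> Delta E" using face_subI[OF A] face_sub[OF A] by blast
            have "\<forall>u. (u,x) \<notin> A - {(v,x)}" using indeg[OF A _ True] by blast
            then have "A - {(v,x)} \<subseteq> E0" using rem_E0[OF A'E] xvA by blast
            then have "A - {(v,x)} \<in> Delta E0" using face_subI[OF A] by blast
            moreover have "A = insert (v,x) (A - {(v,x)})" using True by blast
            ultimately show ?thesis by blast
          next
            case False
            then have "A \<subseteq> E'" using rem_E'[OF A] xvA by blast
            then show ?thesis using face_subI[OF A] by blast
          qed
        qed
      qed
      moreover have "insert (x,v) ` Delta E' \<subseteq> Delta E" using ins_xv a(1) by blast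
      moreover have "insert (v,x) ` Delta E0 \<subseteq> Delta E" using ins_vx a(2) by blast
      ultimately show ?thesis using DmE'E by auto
    qed
    have decC: "dec (Delta E) (Delta E') (x,v) {0} (\<lambda>_. (v,x)) (\<lambda>_. Delta E0)"
    proof (rule dec.intro)
      show "finite (Delta E')" using Delta_fin[OF finE'] .
      show "\<forall>A\<in>Delta E'. finite A" using Delta_finA[OF finE'] .
      show "\<forall>r\<in>{0}. Delta E0 \<subseteq> Delta E'" using DmE0E' by simp
      show "finite ({0}::nat set)" by simp
      show "\<forall>A\<in>Delta E'. (x, v) \<notin> A" using face_sub nov by blast
      show "\<forall>r\<in>{0}. \<forall>A\<in>Delta E'. (v, x) \<notin> A" using face_sub nov by blast
      show "(x, v) \<notin> (\<lambda>_. (v, x)) ` {0}" using xv by simp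
      show "inj_on (\<lambda>_. (v, x)) {0::nat}" by simp
      show "Delta E = Delta E' \<union> insert (x, v) ` Delta E' \<union> (\<Union>r\<in>{0::nat}. insert (v, x) ` Delta E0)" using DC .
    qed
    have fac: "facets (Delta E) = insert (x,v) ` facets (Delta E') \<union> insert (v,x) ` facets (Delta E0)"
      using dec.facets_dec[OF decC] by simp
    have h: "\<forall>i j :: int. htri (Delta E) i j = htri (Delta E') (i - 1) j + htri (Delta E0) (i - 1) (j - 1)"
      using dec.htri_dec[OF decC] by simp
    have ninF: "\<forall>c\<in>set Fs. (x,v) \<notin> c \<and> (v,x) \<notin> c" using Fsh(2) facets_sub face_sub nov by blast
    have ninH: "\<forall>c\<in>set Hs. (x,v) \<notin> c \<and> (v,x) \<notin> c" using Hsh(2) facets_sub face_sub nov E0E' by blast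
    have "shelling_order (Delta E) (map (insert (x, v)) Fs @ map (insert (v, x)) Hs)"
      unfolding shelling_iff
    proof (intro conjI)
      have d1: "distinct (map (insert (x, v)) Fs)"
      proof -
        have "inj_on (insert (x,v)) (set Fs)" unfolding inj_on_def using ninF by (metis Diff_insert_absorb)
        then show ?thesis using Fsh(1) by (simp add: distinct_map)
      qed
      have d2: "distinct (map (insert (v, x)) Hs)"
      proof -
        have "inj_on (insert (v,x)) (set Hs)" unfolding inj_on_def using ninH by (metis Diff_insert_absorb)
        then show ?thesis using Hsh(1) by (simp add: distinct_map)
      qed
      have d3: "set (map (insert (x, v)) Fs) \<inter> set (map (insert (v, x)) Hs) = {}"
      proof (rule equals0I)
        fix X assume "X \<in> set (map (insert (x, v)) Fs) \<inter> set (map (insert (v, x)) Hs)"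
        then obtain H where H: "H \<in> set Hs" "X = insert (v,x) H" "(x,v) \<in> X" by auto
        then show False using ninH xv by auto
      qed
      show "distinct (map (insert (x, v)) Fs @ map (insert (v, x)) Hs)" using d1 d2 d3 by simp
      show "set (map (insert (x, v)) Fs @ map (insert (v, x)) Hs) = facets (Delta E)"
        using fac Fsh(2) Hsh(2) by simp
      have s1: "sh {} (map (insert (x, v)) Fs)"
        by (rule sh_block[of "{}"]) (use Fsh(3) ninF in simp_all)
      have s2: "sh (set (map (insert (x, v)) Fs)) (map (insert (v, x)) Hs)"
      proof (rule sh_block[of "{}"])
        show "sh {} Hs" by (rule Hsh(3))
        show "\<forall>c\<in>set Hs. (v, x) \<notin> c" using ninH by blast
        show "insert (v, x) ` {} \<subseteq> set (map (insert (x, v)) Fs)" by simp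
        show "\<forall>c\<in>set Hs. \<forall>X\<in>set (map (insert (x, v)) Fs). X \<notin> insert (v, x) ` {} \<longrightarrow>
             RR (set (map (insert (x, v)) Fs)) X (insert (v, x) c)"
        proof (intro ballI impI)
          fix c X assume c: "c \<in> set Hs" and X: "X \<in> set (map (insert (x, v)) Fs)"
          have cE0: "c \<in> Delta E0" using c Hsh(2) facets_sub by blast
          then have "c \<in> Delta E'" using DmE0E' by blast
          then obtain F where F: "F \<in> facets (Delta E')" "c \<subseteq> F" using facet_ex[OF finE'] by blast
          have FF: "F \<in> set Fs" using F Fsh(2) by simp
          have Y: "insert (x,v) F \<in> set (map (insert (x, v)) Fs)" using FF by simp
          have Yc: "insert (x,v) F \<inter> insert (v,x) c = c"
            by (rule inter_lemma) (use xv ninF FF ninH c F(2) in auto)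
          obtain F' where F': "F' \<in> set Fs" "X = insert (x,v) F'" using X by auto
          have "(v,x) \<notin> X" using F' ninF xv by auto
          then show "RR (set (map (insert (x, v)) Fs)) X (insert (v, x) c)"
            using RR_cross[OF Y Yc] ninH c by blast
        qed
      qed
      show "sh {} (map (insert (x, v)) Fs @ map (insert (v, x)) Hs)"
        unfolding sh_append using s1 s2 by simp
    qed
    then show ?thesis using h by blast
  qed
  have partB: "shelling_order (Delta E)
          (map (insert (v, x)) Hs @
           concat (map (\<lambda>p. map (insert (ys ! p, x)) (Gs p)) [0..<length ys])) \<and>
        (\<forall>i j :: int. htri (Delta E) i j =
           htri (Delta E0) (i - 1) j + (\<Sum>p < length ys. htri (Delta (Ep p)) (i - 1) (j - 1)))"
    if a: "(x, v) \<notin> E" "(v, x) \<in> E"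
  proof -
    define ee where "ee p = (ys ! p, x)" for p
    have injee: "inj_on ee {..<length ys}"
      unfolding inj_on_def ee_def using ys_dist by (simp add: nth_eq_iff_index_eq)
    have DB: "Delta E = Delta E0 \<union> insert (v,x) ` Delta E0 \<union> (\<Union>p\<in>{..<length ys}. insert (ee p) ` Delta (Ep p))"
    proof -
      have "Delta E \<subseteq> Delta E0 \<union> insert (v,x) ` Delta E0 \<union> (\<Union>p\<in>{..<length ys}. insert (ee p) ` Delta (Ep p))"
      proof
        fix A assume A: "A \<in> Delta E"
        have xvA: "(x,v) \<notin> A" using face_sub[OF A] a(1) by blast
        show "A \<in> Delta E0 \<union> insert (v,x) ` Delta E0 \<union> (\<Union>p\<in>{..<length ys}. insert (ee p) ` Delta (Ep p))"
        proof (cases "(v,x) \<in> A")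
          case True
          have A'E: "A - {(v,x)} \<in> Delta E" using face_subI[OF A] face_sub[OF A] by blast
          have "\<forall>u. (u,x) \<notin> A - {(v,x)}" using indeg[OF A _ True] by blast
          then have "A - {(v,x)} \<subseteq> E0" using rem_E0[OF A'E] xvA by blast
          then have "A - {(v,x)} \<in> Delta E0" using face_subI[OF A] by blast
          moreover have "A = insert (v,x) (A - {(v,x)})" using True by blast
          ultimately show ?thesis by blast
        next
          case False
          note vxA = False
          show ?thesis
          proof (cases "\<exists>u. (u,x) \<in> A")
            case True
            then obtain u where u: "(u,x) \<in> A" by blast
            have uv: "u \<noteq> v" using u vxA by blast
            have "(u,x) \<in> E" using u face_sub[OF A] by blast
            then have "(u,x) \<in> E'" using inE' uv xv by blast
            then have "u \<in> set ys" using ys_set by blast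
            then obtain p where p: "p < length ys" "ys ! p = u" by (metis in_set_conv_nth)
            have sub: "A - {(u,x)} \<subseteq> Ep p"
            proof
              fix e assume e: "e \<in> A - {(u,x)}"
              have eE': "e \<in> E'" using rem_E'[OF A] xvA vxA e by blast
              have "snd e \<noteq> x"
              proof
                assume "snd e = x"
                then have "(fst e, x) \<in> A" using e by (cases e) auto
                then have "fst e = u" using indeg[OF A _ u] by blast
                then show False using e \<open>snd e = x\<close> by (cases e) auto
              qed
              moreover have "e \<noteq> (x, ys!p)" using tc[OF A u] e p(2) by blast
              ultimately show "e \<in> Ep p" unfolding Ep_eq using eE' by blast
            qed
            have "A - {(u,x)} \<in> Delta (Ep p)" using face_subI[OF A _ sub] by blast
            moreover have "A = insert (ee p) (A - {(u,x)})" using u p(2) unfolding ee_def by blast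
            ultimately show ?thesis using p(1) by blast
          next
            case False
            then have "A \<subseteq> E0" using rem_E0[OF A] xvA vxA by blast
            then show ?thesis using face_subI[OF A] by blast
          qed
        qed
      qed
      moreover have "insert (v,x) ` Delta E0 \<subseteq> Delta E" using ins_vx a(2) by blast
      moreover have "(\<Union>p\<in>{..<length ys}. insert (ee p) ` Delta (Ep p)) \<subseteq> Delta E"
        using ins_y unfolding ee_def by blast
      ultimately show ?thesis using DmE0E by (intro equalityI Un_least) simp_all
    qed
    have eenE0: "\<forall>A\<in>Delta E0. ee p \<notin> A" for p using face_sub nox unfolding ee_def by blast
    have decB: "dec (Delta E) (Delta E0) (v,x) {..<length ys} ee (\<lambda>p. Delta (Ep p))"
    proof (rule dec.intro)
      show "finite (Delta E0)" using Delta_fin[OF finE0] .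
      show "\<forall>A\<in>Delta E0. finite A" using Delta_finA[OF finE0] .
      show "\<forall>r\<in>{..<length ys}. Delta (Ep r) \<subseteq> Delta E0" using DmEpE0 by blast
      show "finite {..<length ys}" by simp
      show "\<forall>A\<in>Delta E0. (v, x) \<notin> A" using face_sub nov E0E' by blast
      show "\<forall>r\<in>{..<length ys}. \<forall>A\<in>Delta E0. ee r \<notin> A" using eenE0 by blast
      show "(v, x) \<notin> ee ` {..<length ys}" using ysv unfolding ee_def by auto
      show "inj_on ee {..<length ys}" by (rule injee)
      show "Delta E = Delta E0 \<union> insert (v, x) ` Delta E0 \<union> (\<Union>r\<in>{..<length ys}. insert (ee r) ` Delta (Ep r))"
        by (rule DB)
    qed
    have fac: "facets (Delta E) = insert (v,x) ` facets (Delta E0) \<union> (\<Union>p\<in>{..<length ys}. insert (ee p) ` facets (Delta (Ep p)))"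
      using dec.facets_dec[OF decB] by simp
    have h: "\<forall>i j :: int. htri (Delta E) i j =
           htri (Delta E0) (i - 1) j + (\<Sum>p < length ys. htri (Delta (Ep p)) (i - 1) (j - 1))"
      using dec.htri_dec[OF decB] by simp
    have ninH: "\<forall>c\<in>set Hs. (v,x) \<notin> c \<and> c \<subseteq> E0" using Hsh(2) facets_sub face_sub nov E0E' by blast
    have ninG: "\<forall>c\<in>set (Gs p). c \<subseteq> E0 \<and> c \<in> Delta E0" if "p < length ys" for p
      using Gsh(2)[OF that] facets_sub face_sub EpE0 DmEpE0 by blast
    have eeE0: "\<And>p c. c \<subseteq> E0 \<Longrightarrow> ee p \<notin> c" unfolding ee_def using nox by blast
    have vxE0: "\<And>c. c \<subseteq> E0 \<Longrightarrow> (v,x) \<notin> c" using nov E0E' by blast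
    have eevx: "\<And>p. p < length ys \<Longrightarrow> ee p \<noteq> (v,x)" unfolding ee_def using ysv by simp
    define S0 where "S0 = set (map (insert (v, x)) Hs)"
    have CB: "distinct (concat (map (\<lambda>p. map (insert (ee p)) (Gs p)) [0..<length ys])) \<and>
       sh S0 (concat (map (\<lambda>p. map (insert (ee p)) (Gs p)) [0..<length ys]))"
    proof (rule concat_blocks)
      show "\<forall>p<length ys. sh {} (Gs p) \<and> distinct (Gs p)" using Gsh by blast
      show "\<forall>p<length ys. \<forall>c\<in>set (Gs p). \<exists>Y\<in>S0. Y \<inter> insert (ee p) c = c"
      proof (intro allI impI ballI)
        fix p c assume p: "p < length ys" and c: "c \<in> set (Gs p)"
        have cE0: "c \<in> Delta E0" "c \<subseteq> E0" using ninG[OF p] c by auto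
        obtain H where H: "H \<in> facets (Delta E0)" "c \<subseteq> H" using facet_ex[OF finE0 cE0(1)] by blast
        have HH: "H \<in> set Hs" using H Hsh(2) by simp
        have "insert (v,x) H \<inter> insert (ee p) c = c"
          by (rule inter_lemma) (use eevx[OF p] vxE0 cE0 eeE0 ninH HH H in auto)
        moreover have "insert (v,x) H \<in> S0" using HH unfolding S0_def by simp
        ultimately show "\<exists>Y\<in>S0. Y \<inter> insert (ee p) c = c" by blast
      qed
      show "\<forall>p<length ys. \<forall>q<length ys. \<forall>c\<in>set (Gs q). ee p \<notin> c" using ninG eeE0 by blast
      show "\<forall>p<length ys. \<forall>X\<in>S0. ee p \<notin> X"
      proof (intro allI impI ballI)
        fix p X assume p: "p < length ys" and X: "X \<in> S0"
        then obtain H where "H \<in> set Hs" "X = insert (v,x) H" unfolding S0_def by auto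
        then show "ee p \<notin> X" using eevx[OF p] ninH eeE0 by blast
      qed
      show "inj_on ee {..<length ys}" by (rule injee)
    qed
    have eeq: "(\<lambda>p. map (insert (ys ! p, x)) (Gs p)) = (\<lambda>p. map (insert (ee p)) (Gs p))"
      unfolding ee_def ..
    have "shelling_order (Delta E) (map (insert (v, x)) Hs @ concat (map (\<lambda>p. map (insert (ee p)) (Gs p)) [0..<length ys]))"
      unfolding shelling_iff
    proof (intro conjI)
      have d2: "distinct (map (insert (v, x)) Hs)"
      proof -
        have "inj_on (insert (v,x)) (set Hs)" unfolding inj_on_def using ninH by (metis Diff_insert_absorb)
        then show ?thesis using Hsh(1) by (simp add: distinct_map)
      qed
      have d3: "set (map (insert (v, x)) Hs) \<inter> set (concat (map (\<lambda>p. map (insert (ee p)) (Gs p)) [0..<length ys])) = {}"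
      proof (rule equals0I)
        fix X assume X: "X \<in> set (map (insert (v, x)) Hs) \<inter> set (concat (map (\<lambda>p. map (insert (ee p)) (Gs p)) [0..<length ys]))"
        then obtain H where H: "H \<in> set Hs" "X = insert (v,x) H" by auto
        from X obtain p c where pc: "p < length ys" "c \<in> set (Gs p)" "X = insert (ee p) c" by auto
        have "ee p \<in> insert (v,x) H" using H(2) pc(3) by (metis insertI1)
        then show False using eevx[OF pc(1)] eeE0 ninH H(1) by blast
      qed
      show "distinct (map (insert (v, x)) Hs @ concat (map (\<lambda>p. map (insert (ee p)) (Gs p)) [0..<length ys]))"
        using d2 d3 CB by simp
      have "set (concat (map (\<lambda>p. map (insert (ee p)) (Gs p)) [0..<length ys])) = (\<Union>p\<in>{..<length ys}. insert (ee p) ` facets (Delta (Ep p)))"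
        using Gsh(2) by (auto simp: atLeast0LessThan)
      then show "set (map (insert (v, x)) Hs @ concat (map (\<lambda>p. map (insert (ee p)) (Gs p)) [0..<length ys])) = facets (Delta E)"
        using fac Hsh(2) by simp
      have s1: "sh {} (map (insert (v, x)) Hs)"
        by (rule sh_block[of "{}"]) (use Hsh(3) ninH in simp_all)
      show "sh {} (map (insert (v, x)) Hs @ concat (map (\<lambda>p. map (insert (ee p)) (Gs p)) [0..<length ys]))"
        unfolding sh_append using s1 CB unfolding S0_def by simp
    qed
    then show ?thesis using h unfolding eeq by blast
  qed
  show ?thesis using partA partB partC by blast
qed

end
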